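(* Let $\mathcal{G}$ be a MAG on vertex set $V$ and $W\subseteq V$. Then $\mathcal{S}(\mathcal{G}_W)\subseteq\mathcal{S}(\mathcal{G})\cap\mathcal{P}(W)$, where $\mathcal{P}(W)$ is the power set of $W$.
   Context: A MAG is an acyclic directed mixed graph (directed and bidirected edges, no directed cycles) with $\mathrm{sib}(v)\cap\mathrm{an}(v)=\emptyset$ for all $v$ and in which every nonadjacent pair is m-separated by some set; induced subgraphs $\mathcal{G}_W$ of MAGs are MAGs. For a MAG $\mathcal{G}$: $\mathrm{barren}(U)=\{u\in U:\mathrm{de}(u)\cap U=\{u\}\}$; a nonempty $H$ is a head if $\mathrm{barren}(H)=H$ and $H$ lies in a single district (bidirected-connected component) of $\mathcal{G}_{\mathrm{an}(H)}$; $\mathrm{tail}(H)=(\mathrm{dis}_{\mathrm{an}(H)}(H)\setminus H)\cup\mathrm{pa}(\mathrm{dis}_{\mathrm{an}(H)}(H))$; the parametrizing sets are $\mathcal{S}(\mathcal{G})=\{H\cup A:H\text{ a head},A\subseteq\mathrm{tail}(H)\}$. $\mathcal{S}(\mathcal{G}_W)$ is the same construction applied to the MAG $\mathcal{G}_W$. *)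

theory Defs
  imports Main
begin

text \<open>Mixed graphs: a vertex set, directed edges (u,v) meaning u -> v,
  and bidirected edges (u,v) meaning u <-> v (stored symmetrically).\<close>

record 'a mgraph =
  verts :: "'a set"
  dir   :: "('a \<times> 'a) set"
  bi    :: "('a \<times> 'a) set"

definition anc :: "'a mgraph \<Rightarrow> 'a set \<Rightarrow> 'a set" where
  "anc G A = {u \<in> verts G. \<exists>a\<in>A. (u, a) \<in> (dir G)\<^sup>*}"

definition desc :: "'a mgraph \<Rightarrow> 'a set \<Rightarrow> 'a set" where
  "desc G A = {d \<in> verts G. \<exists>a\<in>A. (a, d) \<in> (dir G)\<^sup>*}"

definition sib :: "'a mgraph \<Rightarrow> 'a \<Rightarrow> 'a set" where
  "sib G v = {u. (u, v) \<in> bi G}"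

definition pa :: "'a mgraph \<Rightarrow> 'a set \<Rightarrow> 'a set" where
  "pa G A = {u. \<exists>a\<in>A. (u, a) \<in> dir G}"

definition induced :: "'a mgraph \<Rightarrow> 'a set \<Rightarrow> 'a mgraph" where
  "induced G W = \<lparr>verts = verts G \<inter> W, dir = dir G \<inter> (W \<times> W), bi = bi G \<inter> (W \<times> W)\<rparr>"

definition adjacent :: "'a mgraph \<Rightarrow> 'a \<Rightarrow> 'a \<Rightarrow> bool" where
  "adjacent G u v \<longleftrightarrow> (u, v) \<in> dir G \<or> (v, u) \<in> dir G \<or> (u, v) \<in> bi G \<or> (v, u) \<in> bi G"

definition arrowhead :: "'a mgraph \<Rightarrow> 'a \<Rightarrow> 'a \<Rightarrow> bool" where
  "arrowhead G u v \<longleftrightarrow> (u, v) \<in> dir G \<or> (u, v) \<in> bi G \<or> (v, u) \<in> bi G"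

definition collider :: "'a mgraph \<Rightarrow> 'a list \<Rightarrow> nat \<Rightarrow> bool" where
  "collider G p i \<longleftrightarrow> arrowhead G (p ! (i - 1)) (p ! i) \<and> arrowhead G (p ! Suc i) (p ! i)"

definition m_connecting :: "'a mgraph \<Rightarrow> 'a set \<Rightarrow> 'a \<Rightarrow> 'a \<Rightarrow> 'a list \<Rightarrow> bool" where
  "m_connecting G Z x y p \<longleftrightarrow>
     p \<noteq> [] \<and> hd p = x \<and> last p = y \<and> distinct p \<and> set p \<subseteq> verts G \<and>
     (\<forall>i. Suc i < length p \<longrightarrow> adjacent G (p ! i) (p ! Suc i)) \<and>
     (\<forall>i. 0 < i \<and> Suc i < length p \<longrightarrow>
        (collider G p i \<longrightarrow> p ! i \<in> anc G Z) \<and>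
        (\<not> collider G p i \<longrightarrow> p ! i \<notin> Z))"

definition m_separated :: "'a mgraph \<Rightarrow> 'a \<Rightarrow> 'a \<Rightarrow> 'a set \<Rightarrow> bool" where
  "m_separated G x y Z \<longleftrightarrow> \<not> (\<exists>p. m_connecting G Z x y p)"

definition is_MAG :: "'a mgraph \<Rightarrow> bool" where
  "is_MAG G \<longleftrightarrow>
     finite (verts G) \<and> dir G \<subseteq> verts G \<times> verts G \<and> bi G \<subseteq> verts G \<times> verts G \<and>
     sym (bi G) \<and> acyclic (dir G) \<and>
     (\<forall>v\<in>verts G. sib G v \<inter> anc G {v} = {}) \<and>
     (\<forall>x\<in>verts G. \<forall>y\<in>verts G. x \<noteq> y \<and> \<not> adjacent G x y \<longrightarrow>
        (\<exists>Z. Z \<subseteq> verts G - {x, y} \<and> m_separated G x y Z))"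

definition barren :: "'a mgraph \<Rightarrow> 'a set \<Rightarrow> 'a set" where
  "barren G U = {u \<in> U. desc G {u} \<inter> U = {u}}"

definition district :: "'a mgraph \<Rightarrow> 'a \<Rightarrow> 'a set" where
  "district G v = {w \<in> verts G. v \<in> verts G \<and> (v, w) \<in> (bi G)\<^sup>*}"

definition dis_an :: "'a mgraph \<Rightarrow> 'a set \<Rightarrow> 'a set" where
  "dis_an G H = (\<Union>h\<in>H. district (induced G (anc G H)) h)"

definition is_head :: "'a mgraph \<Rightarrow> 'a set \<Rightarrow> bool" where
  "is_head G H \<longleftrightarrow> H \<noteq> {} \<and> H \<subseteq> verts G \<and> barren G H = H \<and>
     (\<exists>v. H \<subseteq> district (induced G (anc G H)) v)"

definition tail :: "'a mgraph \<Rightarrow> 'a set \<Rightarrow> 'a set" where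
  "tail G H = (dis_an G H - H) \<union> pa G (dis_an G H)"

definition param_sets :: "'a mgraph \<Rightarrow> 'a set set" where
  "param_sets G = {H \<union> A | H A. is_head G H \<and> A \<subseteq> tail G H}"

end

theory Submission
  imports Defs
begin

lemma sym_induced: "sym (bi G) \<Longrightarrow> sym (bi (induced G X))"
  unfolding induced_def sym_def by auto

lemma district_eq:
  assumes "sym (bi G)" "h \<in> district G v"
  shows "district G h = district G v"
proof -
  have v: "v \<in> verts G" and h: "h \<in> verts G" and vh: "(v,h) \<in> (bi G)\<^sup>*"
    using assms(2) unfolding district_def by auto
  have hv: "(h,v) \<in> (bi G)\<^sup>*" using vh assms(1)
    by (metis rtrancl_converseI sym_conv_converse_eq)
  show ?thesis unfolding district_def using v h vh hv
    by (auto intro: rtrancl_trans)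
qed

lemma barren_sub: "barren G U \<subseteq> U" unfolding barren_def by auto

lemma barren_idem: "barren G (barren G U) = barren G U"
  unfolding barren_def by blast

theorem corollaryB3:
  fixes G :: "'a mgraph" and W :: "'a set"
  assumes "is_MAG G" and "W \<subseteq> verts G"
  shows "param_sets (induced G W) \<subseteq> param_sets G \<inter> Pow W"
proof
  fix S assume "S \<in> param_sets (induced G W)"
  then obtain H A where S: "S = H \<union> A" and hH: "is_head (induced G W) H"
    and A: "A \<subseteq> tail (induced G W) H" unfolding param_sets_def by auto
  define G' where "G' = induced G W"
  define AW where "AW = anc G' H"
  define G'' where "G'' = induced G' AW"
  have fin: "finite (verts G)" and dirV: "dir G \<subseteq> verts G \<times> verts G"
    and symb: "sym (bi G)" and acyc: "acyclic (dir G)"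
    using assms(1) unfolding is_MAG_def by auto
  have symG'': "sym (bi G'')" unfolding G''_def G'_def
    by (intro sym_induced symb)
  obtain v where Hv: "H \<subseteq> district G'' v" and Hne: "H \<noteq> {}"
    using hH unfolding is_head_def G''_def AW_def G'_def by auto
  have dis': "dis_an G' H \<subseteq> district G'' v"
  proof
    fix x assume "x \<in> dis_an G' H"
    then obtain h where "h \<in> H" "x \<in> district G'' h"
      unfolding dis_an_def G''_def AW_def by auto
    then show "x \<in> district G'' v" using district_eq[OF symG''] Hv by blast
  qed
  have vG'': "v \<in> verts G''" using Hv Hne unfolding district_def by auto
  have A2: "A \<subseteq> (district G'' v - H) \<union> pa G' (district G'' v)"
    using A dis' unfolding tail_def G'_def[symmetric] pa_def by blast
  have dirG': "dir G' = dir G \<inter> (W \<times> W)" "verts G' = verts G \<inter> W" "bi G' = bi G \<inter> (W \<times> W)"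
    unfolding G'_def induced_def by auto
  have vertsG'': "verts G'' = verts G \<inter> W \<inter> AW" and biG'': "bi G'' = bi G \<inter> (W \<times> W) \<inter> (AW \<times> AW)"
    unfolding G''_def induced_def dirG' by auto
  have distV: "district G'' v \<subseteq> verts G \<inter> W \<inter> AW"
    unfolding district_def vertsG'' by auto
  have HS: "H \<subseteq> S" using S by auto
  have SW: "S \<subseteq> verts G \<inter> W"
  proof -
    have "H \<subseteq> verts G \<inter> W" using Hv distV by auto
    moreover have "pa G' (district G'' v) \<subseteq> W" unfolding pa_def dirG' by auto
    ultimately show ?thesis using S A2 distV assms(2) by blast
  qed
  have dirrt: "(dir G')\<^sup>* \<subseteq> (dir G)\<^sup>*" unfolding dirG' by (rule rtrancl_mono) auto
  have AWsub: "AW \<subseteq> anc G H" unfolding AW_def anc_def using dirrt dirG' by auto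
  define H' where "H' = barren G S"
  have H'S: "H' \<subseteq> S" unfolding H'_def by (rule barren_sub)
  have finS: "finite S" using SW fin finite_subset by blast
  have finD: "finite (dir G)" using dirV fin by (meson finite_SigmaI finite_subset)
  have wf: "wf (((dir G)\<inverse>)\<^sup>+)"
    using finite_acyclic_wf_converse[OF finD acyc] by (rule wf_trancl)
  have reach: "\<exists>z\<in>H'. (s, z) \<in> (dir G)\<^sup>*" if "s \<in> S" for s
  proof -
    define Q where "Q = {x \<in> S. (s, x) \<in> (dir G)\<^sup>*}"
    have "s \<in> Q" unfolding Q_def using that by auto
    then obtain z where zQ: "z \<in> Q" and zmin: "\<And>y. (y, z) \<in> ((dir G)\<inverse>)\<^sup>+ \<Longrightarrow> y \<notin> Q"
      using wf unfolding wf_eq_minimal by metis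
    have "desc G {z} \<inter> S = {z}"
    proof
      show "desc G {z} \<inter> S \<subseteq> {z}"
      proof
        fix y assume y: "y \<in> desc G {z} \<inter> S"
        then have zy: "(z,y) \<in> (dir G)\<^sup>*" unfolding desc_def by auto
        show "y \<in> {z}"
        proof (rule ccontr)
          assume "y \<notin> {z}"
          then have "(z,y) \<in> (dir G)\<^sup>+" using zy by (auto simp: rtrancl_eq_or_trancl)
          then have "(y,z) \<in> ((dir G)\<inverse>)\<^sup>+" by (simp add: trancl_converse)
          moreover have "y \<in> Q" using y zy zQ unfolding Q_def by (auto intro: rtrancl_trans)
          ultimately show False using zmin by blast
        qed
      qed
      show "{z} \<subseteq> desc G {z} \<inter> S" using zQ SW unfolding Q_def desc_def by auto
    qed
    then have "z \<in> H'" using zQ unfolding H'_def barren_def Q_def by auto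
    then show ?thesis using zQ unfolding Q_def by auto
  qed
  have ancEq: "anc G H' = anc G S"
  proof
    show "anc G H' \<subseteq> anc G S" using H'S unfolding anc_def by auto
    show "anc G S \<subseteq> anc G H'"
      unfolding anc_def using reach by (blast intro: rtrancl_trans)
  qed
  define D where "D = district (induced G (anc G S)) v"
  have AWS: "AW \<subseteq> anc G S" using AWsub HS unfolding anc_def by auto
  have distsub: "district G'' v \<subseteq> D"
  proof -
    have "(bi G'')\<^sup>* \<subseteq> (bi (induced G (anc G S)))\<^sup>*"
      using AWS unfolding biG'' induced_def by (intro rtrancl_mono) auto
    then show ?thesis unfolding D_def district_def vertsG'' induced_def using AWS by auto
  qed
  have H'D: "H' \<subseteq> D"
  proof
    fix h' assume h': "h' \<in> H'"
    show "h' \<in> D"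
    proof (cases "h' \<in> district G'' v")
      case True then show ?thesis using distsub by auto
    next
      case False
      then have "h' \<in> A" using h' H'S S Hv by auto
      then have "h' \<in> pa G' (district G'' v)" using A2 False by auto
      then obtain d where d: "d \<in> district G'' v" "(h', d) \<in> dir G"
        unfolding pa_def dirG' by auto
      then have "d \<in> anc G H" using distV AWsub by auto
      then obtain h where h: "h \<in> H" "(d, h) \<in> (dir G)\<^sup>*" unfolding anc_def by auto
      then have hh: "(h', h) \<in> (dir G)\<^sup>+" using d by auto
      have "h \<in> verts G" using h HS SW by auto
      then have "h \<in> desc G {h'} \<inter> S" using hh h HS unfolding desc_def
        by (auto dest: trancl_into_rtrancl)
      then have "h = h'" using h' unfolding H'_def barren_def by auto
      then show ?thesis using hh acyc unfolding acyclic_def by auto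
    qed
  qed
  have H'ne: "H' \<noteq> {}" using Hne HS reach by blast
  have symI: "sym (bi (induced G (anc G S)))" by (intro sym_induced symb)
  have head: "is_head G H'"
    unfolding is_head_def using H'ne H'S SW barren_idem[of G S] H'D
    unfolding H'_def[symmetric] ancEq D_def by auto
  obtain h0 where h0: "h0 \<in> H'" using H'ne by auto
  have Ddis: "D \<subseteq> dis_an G H'"
    unfolding dis_an_def ancEq using h0 H'D district_eq[OF symI, of h0 v]
    unfolding D_def by auto
  have tailsub: "S - H' \<subseteq> tail G H'"
  proof
    fix s assume s: "s \<in> S - H'"
    show "s \<in> tail G H'"
    proof (cases "s \<in> district G'' v")
      case True then show ?thesis using s distsub Ddis unfolding tail_def by auto
    next
      case False
      then have "s \<in> A" using s S Hv by auto
      then have "s \<in> pa G' (district G'' v)" using A2 False by auto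
      then have "s \<in> pa G (dis_an G H')" using distsub Ddis unfolding pa_def dirG' by blast
      then show ?thesis unfolding tail_def by auto
    qed
  qed
  have "S = H' \<union> (S - H')" using H'S by auto
  then have "S \<in> param_sets G" unfolding param_sets_def using head tailsub by blast
  then show "S \<in> param_sets G \<inter> Pow W" using SW by auto
qed

end
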